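(* Let $f,f_0\in\mathcal F$. Let $g_0$ be a density on $\mathcal X$ with $g_0(x)\le\bar g<\infty$, and let $g$ and $u$ be densities on $\mathcal X$ with $u(x)\ge\underline u>0$ for all $x$. Then $$d_h^2(f_0,f)\le\frac{4\bar g}{\underline u}\int\Big(\sqrt{f_0(y|x)u(x)}-\sqrt{f(y|x)g(x)}\Big)^2\,dy\,dx.$$
   Context: $\mathcal Y\subset\mathbb R^{d_y}$ and $\mathcal X\subset\mathbb R^{d_x}$. $\mathcal F$ is the set of Borel measurable $f:\mathcal Y\times\mathcal X\to[0,\infty)$ with $\int f(y|x)\,dy=1$ for every $x\in\mathcal X$. For $f_1,f_2\in\mathcal F$, $d_h(f_1,f_2)=\big(\int(\sqrt{f_1(y|x)}-\sqrt{f_2(y|x)})^2g_0(x)\,dy\,dx\big)^{1/2}$. All densities are with respect to Lebesgue measure. *)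

theory Defs
  imports "HOL-Analysis.Analysis"
begin

text \<open>The class F of conditional densities f(y|x) on Y \<times> X, written f y x.
  Borel measurability is on Y \<times> X (trace of the Borel sets), expressed via the
  zero extension outside Y \<times> X.\<close>
definition cond_dens_class :: "'y::euclidean_space set \<Rightarrow> 'x::euclidean_space set \<Rightarrow> ('y \<Rightarrow> 'x \<Rightarrow> real) set" where
  "cond_dens_class Y X = {f.
     (\<lambda>(y,x). indicator (Y \<times> X) (y,x) * f y x) \<in> borel_measurable (lborel \<Otimes>\<^sub>M lborel) \<and>
     (\<forall>y\<in>Y. \<forall>x\<in>X. 0 \<le> f y x) \<and>
     (\<forall>x\<in>X. (\<integral>\<^sup>+ y. indicator Y y * ennreal (f y x) \<partial>lborel) = 1)}"

definition density_on :: "'x::euclidean_space set \<Rightarrow> ('x \<Rightarrow> real) \<Rightarrow> bool" where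
  "density_on X g \<longleftrightarrow>
     (\<lambda>x. indicator X x * g x) \<in> borel_measurable lborel \<and>
     (\<forall>x\<in>X. 0 \<le> g x) \<and>
     (\<integral>\<^sup>+ x. indicator X x * ennreal (g x) \<partial>lborel) = 1"

definition hellinger_sq :: "'y::euclidean_space set \<Rightarrow> 'x::euclidean_space set \<Rightarrow> ('x \<Rightarrow> real)
     \<Rightarrow> ('y \<Rightarrow> 'x \<Rightarrow> real) \<Rightarrow> ('y \<Rightarrow> 'x \<Rightarrow> real) \<Rightarrow> ennreal" where
  "hellinger_sq Y X g0 f1 f2 =
     (\<integral>\<^sup>+ (y,x). indicator (Y \<times> X) (y,x) *
        ennreal ((sqrt (f1 y x) - sqrt (f2 y x))\<^sup>2 * g0 x) \<partial>(lborel \<Otimes>\<^sub>M lborel))"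

end

theory Submission imports Defs begin

lemma key1:
  fixes a b :: "'a \<Rightarrow> real"
  assumes [measurable]: "a \<in> borel_measurable M" "b \<in> borel_measurable M"
    and ia: "(\<integral>\<^sup>+y. ennreal ((a y)^2) \<partial>M) = 1" and ib: "(\<integral>\<^sup>+y. ennreal ((b y)^2) \<partial>M) = 1"
    and q: "q \<ge> 0" and pq: "p \<ge> q"
  shows "ennreal ((p-q)^2) \<le> (\<integral>\<^sup>+y. ennreal ((a y * p - b y * q)^2) \<partial>M)"
proof -
  let ?I = "\<integral>\<^sup>+y. ennreal ((a y * p - b y * q)^2) \<partial>M"
  have eq: "ennreal ((a y*p - b y*q)^2) + ennreal((p-q)*q) * ennreal ((b y)^2)
     = ennreal (p*q) * ennreal((a y - b y)^2) + ennreal((p-q)*p) * ennreal((a y)^2)" for y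
  proof -
    have "ennreal ((a y*p - b y*q)^2) + ennreal((p-q)*q) * ennreal ((b y)^2)
       = ennreal ((a y*p - b y*q)^2 + (p-q)*q * (b y)^2)"
      using q pq by (simp add: ennreal_mult)
    also have "(a y*p - b y*q)^2 + (p-q)*q * (b y)^2 = p*q*(a y - b y)^2 + (p-q)*p*(a y)^2"
      by (simp add: power2_eq_square algebra_simps)
    also have "ennreal (p*q*(a y - b y)^2 + (p-q)*p*(a y)^2)
       = ennreal (p*q) * ennreal((a y - b y)^2) + ennreal((p-q)*p) * ennreal((a y)^2)"
      using q pq by (simp add: ennreal_mult)
    finally show ?thesis .
  qed
  have "?I + ennreal((p-q)*q) = (\<integral>\<^sup>+y. ennreal ((a y*p - b y*q)^2) + ennreal((p-q)*q) * ennreal ((b y)^2) \<partial>M)"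
    by (simp add: nn_integral_add nn_integral_cmult ib)
  also have "\<dots> = (\<integral>\<^sup>+y. ennreal (p*q) * ennreal((a y - b y)^2) + ennreal((p-q)*p) * ennreal((a y)^2) \<partial>M)"
    using eq by simp
  also have "\<dots> = ennreal (p*q) * (\<integral>\<^sup>+y. ennreal((a y - b y)^2) \<partial>M) + ennreal((p-q)*p)"
    by (simp add: nn_integral_add nn_integral_cmult ia)
  finally have h: "ennreal((p-q)*p) \<le> ?I + ennreal((p-q)*q)"
    by (metis add.commute le_iff_add)
  show ?thesis
  proof (cases ?I)
    case (real i)
    with h q pq have "(p-q)*p \<le> i + (p-q)*q"
      by (simp add: ennreal_plus[symmetric] del: ennreal_plus)
    then have "(p-q)^2 \<le> i" by (simp add: power2_eq_square algebra_simps)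
    with real show ?thesis by simp
  next
    case top then show ?thesis by simp
  qed
qed

lemma key:
  fixes a b :: "'a \<Rightarrow> real"
  assumes "a \<in> borel_measurable M" "b \<in> borel_measurable M"
    and "(\<integral>\<^sup>+y. ennreal ((a y)^2) \<partial>M) = 1" and "(\<integral>\<^sup>+y. ennreal ((b y)^2) \<partial>M) = 1"
    and "q \<ge> 0" and "p \<ge> 0"
  shows "ennreal ((p-q)^2) \<le> (\<integral>\<^sup>+y. ennreal ((a y * p - b y * q)^2) \<partial>M)"
proof (cases "p \<ge> q")
  case True then show ?thesis using key1[OF assms(1-5)] by blast
next
  case False
  have "ennreal ((q-p)^2) \<le> (\<integral>\<^sup>+y. ennreal ((b y * q - a y * p)^2) \<partial>M)"
    using key1[OF assms(2,1,4,3,6)] False by simp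
  moreover have "(q-p)^2 = (p-q)^2" "\<And>y. (b y * q - a y * p)^2 = (a y * p - b y * q)^2"
    by (simp_all add: power2_commute)
  ultimately show ?thesis by simp
qed
theorem lemma1:
  fixes Y :: "'y::euclidean_space set" and X :: "'x::euclidean_space set"
    and f f0 :: "'y \<Rightarrow> 'x \<Rightarrow> real" and g0 g u :: "'x \<Rightarrow> real"
    and gbar ulow :: real
  assumes "Y \<in> sets lborel" and "X \<in> sets lborel"
    and "f \<in> cond_dens_class Y X" and "f0 \<in> cond_dens_class Y X"
    and "density_on X g0" and "\<forall>x\<in>X. g0 x \<le> gbar"
    and "density_on X g" and "density_on X u"
    and "ulow > 0" and "\<forall>x\<in>X. u x \<ge> ulow"
  shows "hellinger_sq Y X g0 f0 f \<le>
    ennreal (4 * gbar / ulow) *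
    (\<integral>\<^sup>+ (y,x). indicator (Y \<times> X) (y,x) *
        ennreal ((sqrt (f0 y x * u x) - sqrt (f y x * g x))\<^sup>2) \<partial>(lborel \<Otimes>\<^sub>M lborel))"
proof (cases "X = {}")
  case True
  then show ?thesis unfolding hellinger_sq_def by (simp add: case_prod_unfold)
next
  case False
  then obtain x0 where "x0 \<in> X" by blast
  have g0nn: "\<forall>x\<in>X. 0 \<le> g0 x" using assms(5) unfolding density_on_def by blast
  have gbar: "gbar \<ge> 0" using g0nn assms(6) \<open>x0 \<in> X\<close> by force
  define c where "c = gbar / ulow"
  have c: "c \<ge> 0" using gbar assms(9) by (simp add: c_def)
  define M where "M = (lborel \<Otimes>\<^sub>M lborel :: ('y \<times> 'x) measure)"
  define F0 :: "'y \<times> 'x \<Rightarrow> real" where "F0 = (\<lambda>(y,x). indicator (Y \<times> X) (y,x) * f0 y x)"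
  define F :: "'y \<times> 'x \<Rightarrow> real" where "F = (\<lambda>(y,x). indicator (Y \<times> X) (y,x) * f y x)"
  define A where "A = (\<lambda>z. sqrt (F0 z))"
  define B where "B = (\<lambda>z. sqrt (F z))"
  define P where "P = (\<lambda>x. sqrt (indicator X x * u x))"
  define Q where "Q = (\<lambda>x. sqrt (indicator X x * g x))"
  define G0 where "G0 = (\<lambda>x. indicator X x * g0 x)"
  have F0m[measurable]: "F0 \<in> borel_measurable M" using assms(4) unfolding F0_def M_def cond_dens_class_def by blast
  have Fm[measurable]: "F \<in> borel_measurable M" using assms(3) unfolding F_def M_def cond_dens_class_def by blast
  have "(\<lambda>x. indicator X x * u x) \<in> borel_measurable lborel" using assms(8) unfolding density_on_def by blast
  then have Pm[measurable]: "P \<in> borel_measurable lborel" unfolding P_def by (rule measurable_compose) simp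
  have "(\<lambda>x. indicator X x * g x) \<in> borel_measurable lborel" using assms(7) unfolding density_on_def by blast
  then have Qm[measurable]: "Q \<in> borel_measurable lborel" unfolding Q_def by (rule measurable_compose) simp
  have Am[measurable]: "A \<in> borel_measurable M" unfolding A_def by measurable
  have Bm[measurable]: "B \<in> borel_measurable M" unfolding B_def by measurable
  have Psm[measurable]: "(\<lambda>z. P (snd z)) \<in> borel_measurable M" unfolding M_def by measurable
  have Qsm[measurable]: "(\<lambda>z. Q (snd z)) \<in> borel_measurable M" unfolding M_def by measurable
  have f0nn: "\<forall>y\<in>Y. \<forall>x\<in>X. 0 \<le> f0 y x" using assms(4) unfolding cond_dens_class_def by blast
  have fnn: "\<forall>y\<in>Y. \<forall>x\<in>X. 0 \<le> f y x" using assms(3) unfolding cond_dens_class_def by blast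
  have unn: "\<forall>x\<in>X. 0 \<le> u x" using assms(8) unfolding density_on_def by blast
  have gnn: "\<forall>x\<in>X. 0 \<le> g x" using assms(7) unfolding density_on_def by blast
  have f0i: "\<forall>x\<in>X. (\<integral>\<^sup>+ y. indicator Y y * ennreal (f0 y x) \<partial>lborel) = 1" using assms(4) unfolding cond_dens_class_def by blast
  have fi: "\<forall>x\<in>X. (\<integral>\<^sup>+ y. indicator Y y * ennreal (f y x) \<partial>lborel) = 1" using assms(3) unfolding cond_dens_class_def by blast
  define J where "J = (\<integral>\<^sup>+ z. ennreal ((A z * P (snd z) - B z * Q (snd z))^2) \<partial>M)"
  define K where "K = (\<integral>\<^sup>+ z. ennreal ((B z * Q (snd z) - B z * P (snd z))^2) \<partial>M)"
  have L: "hellinger_sq Y X g0 f0 f = (\<integral>\<^sup>+ z. ennreal ((A z - B z)^2 * G0 (snd z)) \<partial>M)"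
    unfolding hellinger_sq_def M_def
    by (rule nn_integral_cong) (auto simp: A_def B_def F0_def F_def G0_def indicator_def)
  have R: "(\<integral>\<^sup>+ (y,x). indicator (Y \<times> X) (y,x) *
        ennreal ((sqrt (f0 y x * u x) - sqrt (f y x * g x))\<^sup>2) \<partial>(lborel \<Otimes>\<^sub>M lborel)) = J"
    unfolding J_def M_def
    by (rule nn_integral_cong) (auto simp: A_def B_def F0_def F_def P_def Q_def indicator_def real_sqrt_mult)
  have step1: "(\<integral>\<^sup>+ z. ennreal ((A z - B z)^2 * G0 (snd z)) \<partial>M)
      \<le> (\<integral>\<^sup>+ z. ennreal c * ennreal ((A z * P (snd z) - B z * P (snd z))^2) \<partial>M)"
  proof (rule nn_integral_mono)
    fix z :: "'y \<times> 'x"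
    obtain y x where z: "z = (y,x)" by fastforce
    show "ennreal ((A z - B z)^2 * G0 (snd z)) \<le> ennreal c * ennreal ((A z * P (snd z) - B z * P (snd z))^2)"
    proof (cases "x \<in> X")
      case False then show ?thesis by (simp add: z G0_def)
    next
      case True
      have ux: "u x \<ge> ulow" using True assms(10) by blast
      have "g0 x \<le> c * u x"
      proof -
        have "g0 x \<le> gbar" using True assms(6) by blast
        also have "gbar = c * ulow" using assms(9) by (simp add: c_def)
        also have "\<dots> \<le> c * u x" using c ux by (simp add: mult_left_mono)
        finally show ?thesis .
      qed
      then have "(A z - B z)^2 * g0 x \<le> (A z - B z)^2 * (c * u x)"
        by (simp add: mult_left_mono)
      also have "\<dots> = c * (A z * P x - B z * P x)^2"
        using True unn by (simp add: P_def power2_eq_square algebra_simps)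
      finally have "(A z - B z)^2 * G0 x \<le> c * (A z * P x - B z * P x)^2"
        using True by (simp add: G0_def)
      then show ?thesis using c by (simp add: z ennreal_mult[symmetric])
    qed
  qed
  also have "\<dots> = ennreal c * (\<integral>\<^sup>+ z. ennreal ((A z * P (snd z) - B z * P (snd z))^2) \<partial>M)"
    by (simp add: nn_integral_cmult)
  finally have S1: "hellinger_sq Y X g0 f0 f \<le> ennreal c * (\<integral>\<^sup>+ z. ennreal ((A z * P (snd z) - B z * P (snd z))^2) \<partial>M)"
    using L by simp
  have S2: "(\<integral>\<^sup>+ z. ennreal ((A z * P (snd z) - B z * P (snd z))^2) \<partial>M) \<le> 2 * J + 2 * K"
  proof -
    have "(\<integral>\<^sup>+ z. ennreal ((A z * P (snd z) - B z * P (snd z))^2) \<partial>M)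
       \<le> (\<integral>\<^sup>+ z. 2 * ennreal ((A z * P (snd z) - B z * Q (snd z))^2) + 2 * ennreal ((B z * Q (snd z) - B z * P (snd z))^2) \<partial>M)"
    proof (rule nn_integral_mono)
      fix z
      have ineq: "(A z * P (snd z) - B z * P (snd z))^2 \<le> 2 * (A z * P (snd z) - B z * Q (snd z))^2 + 2 * (B z * Q (snd z) - B z * P (snd z))^2"
      proof -
        have st: "(s + t)^2 \<le> 2 * s^2 + 2 * t^2" for s t :: real
        proof -
          have "0 \<le> (s-t)^2" by simp
          then show ?thesis by (simp add: power2_eq_square algebra_simps)
        qed
        show ?thesis using st[of "A z * P (snd z) - B z * Q (snd z)" "B z * Q (snd z) - B z * P (snd z)"] by simp
      qed
      show "ennreal ((A z * P (snd z) - B z * P (snd z))^2) \<le> 2 * ennreal ((A z * P (snd z) - B z * Q (snd z))^2) + 2 * ennreal ((B z * Q (snd z) - B z * P (snd z))^2)"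
      proof -
        have e: "ennreal (2 * a + 2 * b) = 2 * ennreal a + 2 * ennreal b" if "a \<ge> 0" "b \<ge> 0" for a b :: real
          using that by (simp add: ennreal_mult)
        note ennreal_leI[OF ineq]
        also have "ennreal (2 * (A z * P (snd z) - B z * Q (snd z))^2 + 2 * (B z * Q (snd z) - B z * P (snd z))^2) = 2 * ennreal ((A z * P (snd z) - B z * Q (snd z))^2) + 2 * ennreal ((B z * Q (snd z) - B z * P (snd z))^2)"
          by (rule e) simp_all
        finally show ?thesis .
      qed
    qed
    also have "\<dots> = 2 * J + 2 * K"
      by (simp add: nn_integral_add nn_integral_cmult J_def K_def)
    finally show ?thesis .
  qed
  have PS: "pair_sigma_finite (lborel :: 'y measure) (lborel :: 'x measure)"
    by (simp add: pair_sigma_finite_def lborel.sigma_finite_measure_axioms)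
  have sec: "(\<lambda>y. h (y, x)) \<in> borel_measurable lborel" if "h \<in> borel_measurable M" for h :: "'y \<times> 'x \<Rightarrow> real" and x
    using measurable_compose[OF measurable_Pair2'[of x "lborel :: 'x measure" "lborel :: 'y measure"] that[unfolded M_def]] by simp
  have KJ: "K \<le> J"
  proof -
    have "K = (\<integral>\<^sup>+ x. (\<integral>\<^sup>+ y. ennreal ((B (y,x) * Q x - B (y,x) * P x)^2) \<partial>lborel) \<partial>lborel)"
      unfolding K_def M_def by (subst pair_sigma_finite.nn_integral_snd[OF PS, symmetric]) (auto simp: M_def[symmetric])
    also have "\<dots> \<le> (\<integral>\<^sup>+ x. (\<integral>\<^sup>+ y. ennreal ((A (y,x) * P x - B (y,x) * Q x)^2) \<partial>lborel) \<partial>lborel)"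
    proof (rule nn_integral_mono)
      fix x
      show "(\<integral>\<^sup>+ y. ennreal ((B (y,x) * Q x - B (y,x) * P x)^2) \<partial>lborel) \<le> (\<integral>\<^sup>+ y. ennreal ((A (y,x) * P x - B (y,x) * Q x)^2) \<partial>lborel)"
      proof (cases "x \<in> X")
        case False then show ?thesis by (simp add: P_def Q_def)
      next
        case True
        have ia: "(\<integral>\<^sup>+y. ennreal ((A (y,x))^2) \<partial>lborel) = 1"
          using f0i True
          by (subst nn_integral_cong[where v="\<lambda>y. indicator Y y * ennreal (f0 y x)"])
             (auto simp: A_def F0_def indicator_def f0nn)
        have ib: "(\<integral>\<^sup>+y. ennreal ((B (y,x))^2) \<partial>lborel) = 1"
          using fi True
          by (subst nn_integral_cong[where v="\<lambda>y. indicator Y y * ennreal (f y x)"])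
             (auto simp: B_def F_def indicator_def fnn)
        have "(\<integral>\<^sup>+ y. ennreal ((B (y,x) * Q x - B (y,x) * P x)^2) \<partial>lborel)
            = (\<integral>\<^sup>+ y. ennreal ((P x - Q x)^2) * ennreal ((B (y,x))^2) \<partial>lborel)"
          by (rule nn_integral_cong) (subst ennreal_mult[symmetric], simp, simp, rule arg_cong[where f=ennreal], simp add: power2_eq_square algebra_simps)
        also have "\<dots> = ennreal ((P x - Q x)^2)"
          proof -
          have bm[measurable]: "(\<lambda>y. B (y,x)) \<in> borel_measurable lborel" by (rule sec[OF Bm])
          show ?thesis by (subst nn_integral_cmult) (measurable, simp add: ib)
        qed
        also have "\<dots> \<le> (\<integral>\<^sup>+ y. ennreal ((A (y,x) * P x - B (y,x) * Q x)^2) \<partial>lborel)"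
          by (rule key[OF sec[OF Am] sec[OF Bm] ia ib]) (use True unn gnn in \<open>simp_all add: P_def Q_def\<close>)
        finally show ?thesis .
      qed
    qed
    also have "\<dots> = J"
      unfolding J_def M_def by (subst pair_sigma_finite.nn_integral_snd[OF PS, symmetric]) (auto simp: M_def[symmetric])
    finally show ?thesis .
  qed
  have "hellinger_sq Y X g0 f0 f \<le> ennreal c * (2 * J + 2 * K)"
    using S1 S2 by (meson dual_order.trans mult_left_mono zero_le)
  also have "\<dots> \<le> ennreal c * (2 * J + 2 * J)"
    using KJ by (intro mult_left_mono add_left_mono) auto
  also have "\<dots> = ennreal (4 * gbar / ulow) * J"
  proof -
    have "4 * gbar / ulow = 4 * c" by (simp add: c_def)
    then have e4: "ennreal (4 * gbar / ulow) = 4 * ennreal c"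
      using c by (simp add: ennreal_mult)
    have "ennreal c * (2 * J + 2 * J) = 4 * ennreal c * J"
      by (simp add: distrib_left[symmetric] mult.commute mult.left_commute flip: mult_2)
    then show ?thesis using e4 by simp
  qed
  finally show ?thesis using R by simp
qed

end
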